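(* In the setting of the context, let $\omega=i\omega_\Im$ with $\omega_\Im\in\mathbb{R}$ and $\omega\notin\{0,\delta_+,\delta_-\}$. Then $\omega\in W_\Omega(T)$ if and only if at least one of the following holds: $$-\omega_\Im^2-\frac{\omega_\Im^2}{c+d\omega_\Im+\omega_\Im^2}\inf W(B)\in\overline{W(A)},\qquad -\omega_\Im^2-\frac{\omega_\Im^2}{c+d\omega_\Im+\omega_\Im^2}\sup W(B)\in\overline{W(A)},$$ $$-\frac{c+d\omega_\Im+\omega_\Im^2}{\omega_\Im^2}\bigl(\omega_\Im^2+\inf W(A)\bigr)\in\overline{W(B)}.$$
   Context: Let $\mathcal{H}$ be a Hilbert space, $A$ a selfadjoint (possibly unbounded) operator in $\mathcal{H}$ and $B$ a nonzero bounded selfadjoint operator. Let $c\ge0$, $d>0$, $\delta_\pm:=\pm\sqrt{c-d^2/4}-id/2$ (principal square root). $W(A),W(B)\subset\mathbb{R}$ are the numerical ranges. For real $\alpha,\beta$ let $p_{(\alpha,\beta)}(\omega):=(\alpha-\omega^2)(c-id\omega-\omega^2)-\beta\omega^2$ with roots $r_1,\dots,r_4$ labelled continuously in $(\alpha,\beta)$ and extended by limits to $\overline{\mathbb{R}}\times\mathbb{R}$ ($\overline{\mathbb{R}}=\mathbb{R}\cup\{\pm\infty\}$), values in $\overline{\mathbb{C}}=\mathbb{C}\cup\{\infty\}$. Let $\Omega:=\overline{W(A)}\times\overline{W(B)}$ (closure of $W(A)$ in $\overline{\mathbb{R}}$) and $W_\Omega(T):=\bigcup_{n=1}^4\bigcup_{(\alpha,\beta)\in\Omega}r_n(\alpha,\beta)$.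 *)

theory Defs
  imports "HOL-Analysis.Analysis" "HOL-Library.Extended_Real"
begin

definition pT :: "real \<Rightarrow> real \<Rightarrow> real \<Rightarrow> real \<Rightarrow> complex \<Rightarrow> complex" where
  "pT c d \<alpha> \<beta> w = (of_real \<alpha> - w\<^sup>2) * (of_real c - \<i> * of_real d * w - w\<^sup>2) - of_real \<beta> * w\<^sup>2"

definition delta_p :: "real \<Rightarrow> real \<Rightarrow> complex" where
  "delta_p c d = csqrt (of_real (c - d\<^sup>2 / 4)) - \<i> * of_real d / 2"
definition delta_m :: "real \<Rightarrow> real \<Rightarrow> complex" where
  "delta_m c d = - csqrt (of_real (c - d\<^sup>2 / 4)) - \<i> * of_real d / 2"

text \<open>Finite values of the roots r_1..r_4 at (alpha,beta) in extended-real x real,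
  the roots being extended by limits: all limits of roots of p_(alpha_k,beta_k)
  with real (alpha_k,beta_k) tending to (alpha,beta).\<close>
definition root_vals :: "real \<Rightarrow> real \<Rightarrow> ereal \<Rightarrow> real \<Rightarrow> complex set" where
  "root_vals c d a b = {z. \<exists>as bs zs. (\<forall>k. pT c d (as k) (bs k) (zs k) = 0)
      \<and> ((\<lambda>k. ereal (as k)) \<longlongrightarrow> a) sequentially \<and> bs \<longlonglongrightarrow> b \<and> zs \<longlonglongrightarrow> z}"

text \<open>W_Omega(T) intersected with C, for Omega = closure of W(A) in extended reals
  times closure of W(B).\<close>
definition W_Omega :: "real \<Rightarrow> real \<Rightarrow> real set \<Rightarrow> real set \<Rightarrow> complex set" where
  "W_Omega c d WA WB = (\<Union>a\<in>closure (ereal ` WA). \<Union>b\<in>closure WB. root_vals c d a b)"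

end

theory Submission
  imports Defs
begin

lemma ereal_in_closure: "(ereal x \<in> closure (ereal ` S)) = (x \<in> closure S)"
proof
  assume "ereal x \<in> closure (ereal ` S)"
  then obtain g where g: "\<And>n. g n \<in> ereal ` S" "g \<longlonglongrightarrow> ereal x"
    unfolding closure_sequential by blast
  define f where "f n = real_of_ereal (g n)" for n
  have gf: "g n = ereal (f n)" and fS: "f n \<in> S" for n
    using g(1)[of n] by (auto simp: f_def)
  have "(\<lambda>n. ereal (f n)) \<longlonglongrightarrow> ereal x" using g(2) gf by (metis (no_types) ext)
  hence "f \<longlonglongrightarrow> x" by (simp add: lim_ereal)
  thus "x \<in> closure S" unfolding closure_sequential using fS by blast
next
  assume "x \<in> closure S"
  then obtain f where f: "\<And>n. f n \<in> S" "f \<longlonglongrightarrow> x"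
    unfolding closure_sequential by blast
  have "(\<lambda>n. ereal (f n)) \<longlonglongrightarrow> ereal x" using f(2) by (simp add: lim_ereal)
  thus "ereal x \<in> closure (ereal ` S)" unfolding closure_sequential using f(1)
    by (intro exI[of _ "\<lambda>n. ereal (f n)"]) auto
qed

lemma inf_notin_closure:
  assumes "bounded (S::real set)"
  shows "\<infinity> \<notin> closure (ereal ` S)" "-\<infinity> \<notin> closure (ereal ` S)"
proof -
  obtain M where M: "\<And>x. x \<in> S \<Longrightarrow> \<bar>x\<bar> \<le> M" using assms bounded_real by blast
  have "closure (ereal ` S) \<subseteq> {ereal (-M)..ereal M}"
    apply (rule closure_minimal)
    using M by (force simp: abs_le_iff) (simp add: closed_atLeastAtMost)
  thus "\<infinity> \<notin> closure (ereal ` S)" "-\<infinity> \<notin> closure (ereal ` S)" by auto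
qed

lemma core:
  fixes S :: "real set" and k T lo hi :: real
  assumes k: "k \<noteq> 0" and lohi: "lo \<le> hi" and S: "S \<noteq> {}" "convex S"
  shows "(\<exists>\<alpha>\<in>closure S. \<exists>b\<in>{lo..hi}. \<alpha> = -T - k*b) \<longleftrightarrow>
    (-T-k*lo \<in> closure S \<or> -T-k*hi \<in> closure S \<or> (bdd_below S \<and> -(T + Inf S)/k \<in> {lo..hi}))"
proof
  assume "\<exists>\<alpha>\<in>closure S. \<exists>b\<in>{lo..hi}. \<alpha> = -T - k*b"
  then obtain \<alpha> b where \<alpha>: "\<alpha> \<in> closure S" and b: "lo \<le> b" "b \<le> hi" and ab: "\<alpha> = -T - k*b"
    by auto
  show "-T-k*lo \<in> closure S \<or> -T-k*hi \<in> closure S \<or> (bdd_below S \<and> -(T + Inf S)/k \<in> {lo..hi})"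
  proof (cases "-T-k*lo \<in> closure S \<or> -T-k*hi \<in> closure S")
    case True thus ?thesis by auto
  next
    case False
    define u where "u = -T-k*lo"
    define v where "v = -T-k*hi"
    define m where "m = min u v"
    define M where "M = max u v"
    have uv: "u \<notin> closure S" "v \<notin> closure S" using False u_def v_def by auto
    have mM: "m \<notin> closure S" "M \<notin> closure S" using uv m_def M_def by (auto simp: min_def max_def)
    have "m \<le> \<alpha> \<and> \<alpha> \<le> M"
    proof (cases "k > 0")
      case True
      have "k*lo \<le> k*b" "k*b \<le> k*hi" using b True by (auto intro: mult_left_mono)
      thus ?thesis using ab m_def M_def u_def v_def by auto
    next
      case False
      hence "k < 0" using k by auto
      have "k*b \<le> k*lo" "k*hi \<le> k*b" using b \<open>k<0\<close> by (auto intro: mult_left_mono_neg)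
      thus ?thesis using ab m_def M_def u_def v_def by auto
    qed
    hence mM2: "m < \<alpha>" "\<alpha> < M" using mM \<alpha> by (metis order_le_less)+
    have iv: "is_interval (closure S)" using S convex_closure is_interval_convex_1 by blast
    have bnd: "m < y \<and> y < M" if y: "y \<in> closure S" for y
    proof (rule ccontr)
      assume "\<not> (m < y \<and> y < M)"
      hence "y \<le> m \<or> M \<le> y" by auto
      thus False
      proof
        assume "y \<le> m"
        hence "m \<in> closure S" using iv y \<alpha> mM2 unfolding is_interval_1 by (meson less_imp_le)
        thus False using mM by auto
      next
        assume "M \<le> y"
        hence "M \<in> closure S" using iv y \<alpha> mM2 unfolding is_interval_1 by (meson less_imp_le)
        thus False using mM by auto
      qed
    qed
    have bS: "bdd_below S" using bnd closure_subset
      by (metis bdd_below.I less_imp_le subsetD)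
    define I where "I = Inf S"
    have I: "m < I" "I < M" using bnd closure_contains_Inf[OF S(1) bS] I_def by auto
    define b' where "b' = -(T + I)/k"
    have kb: "k*b' = -(T+I)" using k b'_def by auto
    have "lo \<le> b' \<and> b' \<le> hi"
    proof (cases "k > 0")
      case True
      have "k*lo \<le> k*hi" using lohi True by (simp add: mult_left_mono)
      hence "k*lo \<le> k*b'" "k*b' \<le> k*hi" using I kb True m_def M_def u_def v_def
        by (auto simp: min_def max_def split: if_splits)
      thus ?thesis using True by (auto simp: mult_le_cancel_left_pos)
    next
      case False
      hence k0: "k < 0" using k by auto
      have "k*hi \<le> k*lo" using lohi k0 by (simp add: mult_left_mono_neg)
      hence "k*b' \<le> k*lo" "k*hi \<le> k*b'" using I kb k0 m_def M_def u_def v_def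
        by (auto simp: min_def max_def split: if_splits)
      thus ?thesis using k0 by (auto simp: mult_le_cancel_left_neg)
    qed
    thus ?thesis using bS b'_def I_def by auto
  qed
next
  assume "-T-k*lo \<in> closure S \<or> -T-k*hi \<in> closure S \<or> (bdd_below S \<and> -(T + Inf S)/k \<in> {lo..hi})"
  thus "\<exists>\<alpha>\<in>closure S. \<exists>b\<in>{lo..hi}. \<alpha> = -T - k*b"
  proof (elim disjE)
    assume "-T-k*lo \<in> closure S" thus ?thesis using lohi by force
  next
    assume "-T-k*hi \<in> closure S" thus ?thesis using lohi by force
  next
    assume h: "bdd_below S \<and> -(T + Inf S)/k \<in> {lo..hi}"
    hence "Inf S \<in> closure S" using closure_contains_Inf S by blast
    moreover have "Inf S = -T - k * (-(T + Inf S)/k)" using k by auto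
    ultimately show ?thesis using h by blast
  qed
qed

lemma pT_it: "pT c d \<alpha> \<beta> (\<i> * of_real t) = of_real ((\<alpha> + t\<^sup>2)*(c+d*t+t\<^sup>2) + \<beta>*t\<^sup>2)"
  by (simp add: pT_def complex_eq_iff power2_eq_square algebra_simps)

lemma W_char:
  assumes q: "c + d*t + t\<^sup>2 \<noteq> 0" and om: "\<omega> = \<i> * of_real t"
  shows "\<omega> \<in> W_Omega c d WA WB \<longleftrightarrow>
    (\<exists>\<alpha>\<in>closure WA. \<exists>b\<in>closure WB. (\<alpha> + t\<^sup>2)*(c+d*t+t\<^sup>2) + b*t\<^sup>2 = 0)"
proof
  assume "\<omega> \<in> W_Omega c d WA WB"
  then obtain a b as bs zs where a: "a \<in> closure (ereal ` WA)" and b: "b \<in> closure WB"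
    and p: "\<And>k. pT c d (as k) (bs k) (zs k) = 0"
    and la: "((\<lambda>k. ereal (as k)) \<longlongrightarrow> a) sequentially" and lb: "bs \<longlonglongrightarrow> b"
    and lz: "zs \<longlonglongrightarrow> \<omega>"
    unfolding W_Omega_def root_vals_def by blast
  define Q where "Q z = of_real c - \<i> * of_real d * z - z\<^sup>2" for z
  have Qlim: "(\<lambda>k. Q (zs k)) \<longlonglongrightarrow> Q \<omega>" unfolding Q_def by (intro tendsto_intros lz)
  have Qom: "Q \<omega> = of_real (c+d*t+t\<^sup>2)" unfolding Q_def om
    by (simp add: complex_eq_iff power2_eq_square algebra_simps)
  have Qne: "Q \<omega> \<noteq> 0" unfolding Qom of_real_eq_0_iff using q .
  have ev: "eventually (\<lambda>k. Q (zs k) \<noteq> 0) sequentially"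
    using tendsto_imp_eventually_ne[OF Qlim Qne] .
  have ev2: "eventually (\<lambda>k. zs k ^ 2 + of_real (bs k) * zs k ^ 2 / Q (zs k) = of_real (as k)) sequentially"
    using ev
  proof (rule eventually_mono)
    fix k assume Qk: "Q (zs k) \<noteq> 0"
    have "(of_real (as k) - zs k ^ 2) * Q (zs k) = of_real (bs k) * zs k ^ 2"
      using p[of k] unfolding pT_def Q_def by (simp add: algebra_simps)
    thus "zs k ^ 2 + of_real (bs k) * zs k ^ 2 / Q (zs k) = of_real (as k)"
      using Qk by (simp add: field_simps)
  qed
  define L where "L = \<omega>^2 + of_real b * \<omega>^2 / Q \<omega>"
  have "(\<lambda>k. zs k ^ 2 + of_real (bs k) * zs k ^ 2 / Q (zs k)) \<longlonglongrightarrow> L"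
    unfolding L_def by (intro tendsto_intros lz lb Qlim Qne)
  hence "(\<lambda>k. complex_of_real (as k)) \<longlonglongrightarrow> L" using ev2 by (rule Lim_transform_eventually)
  hence "(\<lambda>k. Re (complex_of_real (as k))) \<longlonglongrightarrow> Re L" by (rule tendsto_Re)
  hence lar: "as \<longlonglongrightarrow> Re L" by simp
  hence "(\<lambda>k. ereal (as k)) \<longlonglongrightarrow> ereal (Re L)" by (simp add: lim_ereal)
  hence aeq: "a = ereal (Re L)" using la LIMSEQ_unique by blast
  hence \<alpha>: "Re L \<in> closure WA" using a ereal_in_closure by metis
  have "(\<lambda>k. pT c d (as k) (bs k) (zs k)) \<longlonglongrightarrow> pT c d (Re L) b \<omega>"
    unfolding pT_def by (intro tendsto_intros lar lb lz)
  moreover have "(\<lambda>k. pT c d (as k) (bs k) (zs k)) = (\<lambda>k. 0)" using p by auto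
  ultimately have "pT c d (Re L) b \<omega> = 0" using LIMSEQ_unique[OF _ tendsto_const] by simp
  hence "complex_of_real ((Re L + t\<^sup>2)*(c+d*t+t\<^sup>2) + b*t\<^sup>2) = 0"
    using pT_it[of c d "Re L" b t] om by simp
  hence "(Re L + t\<^sup>2)*(c+d*t+t\<^sup>2) + b*t\<^sup>2 = 0" by (simp only: of_real_eq_0_iff)
  thus "\<exists>\<alpha>\<in>closure WA. \<exists>b\<in>closure WB. (\<alpha> + t\<^sup>2)*(c+d*t+t\<^sup>2) + b*t\<^sup>2 = 0"
    using \<alpha> b by blast
next
  assume "\<exists>\<alpha>\<in>closure WA. \<exists>b\<in>closure WB. (\<alpha> + t\<^sup>2)*(c+d*t+t\<^sup>2) + b*t\<^sup>2 = 0"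
  then obtain \<alpha> b where \<alpha>: "\<alpha> \<in> closure WA" and b: "b \<in> closure WB"
    and e: "(\<alpha> + t\<^sup>2)*(c+d*t+t\<^sup>2) + b*t\<^sup>2 = 0" by blast
  have "pT c d \<alpha> b \<omega> = 0" unfolding om pT_it e by simp
  hence "\<omega> \<in> root_vals c d (ereal \<alpha>) b" unfolding root_vals_def
    by (intro CollectI exI[of _ "\<lambda>_. \<alpha>"] exI[of _ "\<lambda>_. b"] exI[of _ "\<lambda>_. \<omega>"]) auto
  moreover have "ereal \<alpha> \<in> closure (ereal ` WA)" using \<alpha> ereal_in_closure by metis
  ultimately show "\<omega> \<in> W_Omega c d WA WB" unfolding W_Omega_def using b by blast
qed

lemma q_ne:
  assumes cd: "d > 0" and om: "\<omega> = \<i> * of_real t" "\<omega> \<notin> {0, delta_p c d, delta_m c d}"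
  shows "c + d*t + t\<^sup>2 \<noteq> 0"
proof
  assume q: "c + d*t + t\<^sup>2 = 0"
  have sq: "(t + d/2)\<^sup>2 = d\<^sup>2/4 - c" using q by (simp add: power2_eq_square algebra_simps)
  show False
  proof (cases "c - d\<^sup>2/4 \<ge> 0")
    case True
    hence "(t + d/2)\<^sup>2 \<le> 0" using sq by simp
    hence "(t + d/2)\<^sup>2 = 0" by (meson antisym zero_le_power2)
    hence t: "t = -d/2" by (simp add: algebra_simps)
    hence "c - d\<^sup>2/4 = 0" using sq by simp
    hence "delta_p c d = \<omega>" unfolding delta_p_def om t by (simp add: complex_eq_iff)
    thus False using om by auto
  next
    case False
    define s where "s = sqrt (d\<^sup>2/4 - c)"
    have cs: "csqrt (of_real (c - d\<^sup>2/4)) = \<i> * of_real s"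
      unfolding s_def using False by (subst csqrt_of_real') (simp add: abs_if)
    have "s\<^sup>2 = (t + d/2)\<^sup>2" unfolding s_def using False sq by simp
    hence "t + d/2 = s \<or> t + d/2 = -s" by (metis power2_eq_iff)
    thus False
    proof
      assume "t + d/2 = s"
      hence "delta_p c d = \<omega>" unfolding delta_p_def om cs by (simp add: complex_eq_iff)
      thus False using om by auto
    next
      assume "t + d/2 = -s"
      hence "delta_m c d = \<omega>" unfolding delta_m_def om cs by (simp add: complex_eq_iff)
      thus False using om by auto
    qed
  qed
qed

lemma closure_WB:
  assumes "WB \<noteq> {}" "convex WB" "bounded (WB::real set)"
  shows "closure WB = {Inf WB..Sup WB}"
proof
  have bb: "bdd_below WB" "bdd_above WB" using assms(3) bounded_imp_bdd_below bounded_imp_bdd_above by auto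
  have "WB \<subseteq> {Inf WB..Sup WB}" using bb by (simp add: subset_iff cInf_lower cSup_upper)
  thus "closure WB \<subseteq> {Inf WB..Sup WB}" by (rule closure_minimal[OF _ closed_atLeastAtMost])
  have iv: "is_interval (closure WB)" using assms convex_closure is_interval_convex_1 by blast
  have IS: "Inf WB \<in> closure WB" "Sup WB \<in> closure WB"
    using closure_contains_Inf closure_contains_Sup assms(1) bb by auto
  show "{Inf WB..Sup WB} \<subseteq> closure WB"
  proof
    fix x assume "x \<in> {Inf WB..Sup WB}"
    thus "x \<in> closure WB" using iv IS unfolding is_interval_1 by (meson atLeastAtMost_iff)
  qed
qed

theorem proposition2p4:
  fixes WA WB :: "real set" and c d t :: real and \<omega> :: complex
  assumes WA: "WA \<noteq> {}" "convex WA"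
    and WB: "WB \<noteq> {}" "convex WB" "bounded WB" "WB \<noteq> {0}"
    and cd: "c \<ge> 0" "d > 0"
    and om: "\<omega> = \<i> * of_real t" "\<omega> \<notin> {0, delta_p c d, delta_m c d}"
  shows "\<omega> \<in> W_Omega c d WA WB \<longleftrightarrow>
     (ereal (- t\<^sup>2 - t\<^sup>2 / (c + d * t + t\<^sup>2) * Inf WB) \<in> closure (ereal ` WA)
    \<or> ereal (- t\<^sup>2 - t\<^sup>2 / (c + d * t + t\<^sup>2) * Sup WB) \<in> closure (ereal ` WA)
    \<or> ereal (- (c + d * t + t\<^sup>2) / t\<^sup>2) * (ereal (t\<^sup>2) + Inf (ereal ` WA))
        \<in> closure (ereal ` WB))"
proof -
  define q where "q = c + d * t + t\<^sup>2"
  have q0: "q \<noteq> 0" unfolding q_def using q_ne cd(2) om by blast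
  have t0: "t \<noteq> 0" using om by auto
  define k where "k = t\<^sup>2 / q"
  have k0: "k \<noteq> 0" unfolding k_def using q0 t0 by simp
  define lo where "lo = Inf WB"
  define hi where "hi = Sup WB"
  have cWB: "closure WB = {lo..hi}" unfolding lo_def hi_def using closure_WB WB by blast
  have lohi: "lo \<le> hi" using cWB closure_subset WB(1) by fastforce
  have eqv: "((\<alpha> + t\<^sup>2)*(c+d*t+t\<^sup>2) + b*t\<^sup>2 = 0) = (\<alpha> = -t\<^sup>2 - k*b)" for \<alpha> b
    unfolding k_def q_def[symmetric] using q0 by (auto simp: field_simps)
  have "\<omega> \<in> W_Omega c d WA WB \<longleftrightarrow> (\<exists>\<alpha>\<in>closure WA. \<exists>b\<in>{lo..hi}. \<alpha> = -t\<^sup>2 - k*b)"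
    using W_char[OF q0[unfolded q_def] om(1), of WA WB] unfolding eqv cWB .
  also have "\<dots> \<longleftrightarrow> (-t\<^sup>2-k*lo \<in> closure WA \<or> -t\<^sup>2-k*hi \<in> closure WA
      \<or> (bdd_below WA \<and> -(t\<^sup>2 + Inf WA)/k \<in> {lo..hi}))"
    by (rule core[OF k0 lohi WA])
  also have "\<dots> \<longleftrightarrow> (ereal (- t\<^sup>2 - t\<^sup>2 / (c + d * t + t\<^sup>2) * Inf WB) \<in> closure (ereal ` WA)
    \<or> ereal (- t\<^sup>2 - t\<^sup>2 / (c + d * t + t\<^sup>2) * Sup WB) \<in> closure (ereal ` WA)
    \<or> ereal (- (c + d * t + t\<^sup>2) / t\<^sup>2) * (ereal (t\<^sup>2) + Inf (ereal ` WA))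
        \<in> closure (ereal ` WB))"
  proof -
    have c1: "(ereal (- t\<^sup>2 - t\<^sup>2 / (c + d * t + t\<^sup>2) * Inf WB) \<in> closure (ereal ` WA))
        = (-t\<^sup>2-k*lo \<in> closure WA)"
      unfolding k_def q_def lo_def by (rule ereal_in_closure)
    have c2: "(ereal (- t\<^sup>2 - t\<^sup>2 / (c + d * t + t\<^sup>2) * Sup WB) \<in> closure (ereal ` WA))
        = (-t\<^sup>2-k*hi \<in> closure WA)"
      unfolding k_def q_def hi_def by (rule ereal_in_closure)
    have c3: "(ereal (- (c + d * t + t\<^sup>2) / t\<^sup>2) * (ereal (t\<^sup>2) + Inf (ereal ` WA))
        \<in> closure (ereal ` WB)) = (bdd_below WA \<and> -(t\<^sup>2 + Inf WA)/k \<in> {lo..hi})"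
    proof (cases "bdd_below WA")
      case True
      have "Inf (ereal ` WA) = ereal (Inf WA)" using ereal_Inf'[OF True WA(1)] by simp
      moreover have "- (c + d * t + t\<^sup>2) / t\<^sup>2 * (t\<^sup>2 + Inf WA) = -(t\<^sup>2 + Inf WA)/k"
        unfolding k_def q_def using t0 by (simp add: field_simps)
      ultimately show ?thesis using True by (simp add: ereal_in_closure cWB)
    next
      case False
      have "Inf (ereal ` WA) = -\<infinity>"
      proof (rule ccontr)
        assume "Inf (ereal ` WA) \<noteq> -\<infinity>"
        then obtain b where b: "b > -\<infinity>" "\<forall>i\<in>WA. b \<le> ereal i"
          using INF_eq_minf[of ereal WA] by auto
        obtain i where "i \<in> WA" using WA(1) by auto
        hence "b \<noteq> \<infinity>" using b by auto
        hence "\<forall>i\<in>WA. real_of_ereal b \<le> i" using b by (cases b) auto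
        thus False using False by (auto simp: bdd_below_def)
      qed
      moreover have "- (c + d * t + t\<^sup>2) / t\<^sup>2 \<noteq> 0" using q0 t0 unfolding q_def by simp
      ultimately have "ereal (- (c + d * t + t\<^sup>2) / t\<^sup>2) * (ereal (t\<^sup>2) + Inf (ereal ` WA))
          \<in> {\<infinity>, -\<infinity>}"
        by (cases "- (c + d * t + t\<^sup>2) / t\<^sup>2 > 0") auto
      moreover have gen: "x \<notin> closure (ereal ` WB)" if "x \<in> {\<infinity>, -\<infinity>}" for x
        using that inf_notin_closure[OF WB(3)] by auto
      ultimately have "\<not> (ereal (- (c + d * t + t\<^sup>2) / t\<^sup>2) * (ereal (t\<^sup>2) + Inf (ereal ` WA))
          \<in> closure (ereal ` WB))" by blast
      thus ?thesis using False by simp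
    qed
    show ?thesis using c1 c2 c3 by simp
  qed
  finally show ?thesis .
qed

end
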